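(* Let $X$ be a compact metric space, $f:X\to X$ continuous and $x\in X$. If $\omega_f(x)$ is totally periodic and totally disconnected, then $\omega_f(x)$ is finite.
   Context: $\omega_f(x)=\{y\in X:\ \exists\, n_i\to+\infty,\ f^{n_i}(x)\to y\}$. It is totally periodic if every point $y\in\omega_f(x)$ satisfies $f^m(y)=y$ for some $m\ge1$. *)

theory Defs
  imports "HOL-Analysis.Analysis"
begin

definition omega_limit :: "'a::metric_space set \<Rightarrow> ('a \<Rightarrow> 'a) \<Rightarrow> 'a \<Rightarrow> 'a set" where
  "omega_limit X f x = {y \<in> X. \<exists>n :: nat \<Rightarrow> nat. filterlim n at_top sequentially \<and>
       ((\<lambda>i. (f ^^ n i) x) \<longlongrightarrow> y) sequentially}"

definition totally_periodic :: "('a \<Rightarrow> 'a) \<Rightarrow> 'a set \<Rightarrow> bool" where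
  "totally_periodic f S \<longleftrightarrow> (\<forall>y\<in>S. \<exists>m::nat. m \<ge> 1 \<and> (f ^^ m) y = y)"

definition totally_disconnected :: "'a::topological_space set \<Rightarrow> bool" where
  "totally_disconnected S \<longleftrightarrow> (\<forall>C. C \<subseteq> S \<and> connected C \<longrightarrow> (\<exists>a. C \<subseteq> {a}))"

end

theory Submission
  imports Defs
begin

primrec seqpick :: "(nat \<Rightarrow> nat \<Rightarrow> nat) \<Rightarrow> nat \<Rightarrow> nat" where
  "seqpick g 0 = g 0 0"
| "seqpick g (Suc k) = g (Suc k) (Suc (seqpick g k))"

lemma seqpick_ge:
  assumes "\<And>k N. g k N \<ge> N" shows "seqpick g k \<ge> k"
proof (induction k)
  case 0 then show ?case by simp
next
  case (Suc k)
  have "Suc (seqpick g k) \<le> g (Suc k) (Suc (seqpick g k))" by (rule assms)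
  with Suc show ?case by simp
qed

lemma fix_funpow: "g y = y \<Longrightarrow> (g ^^ n) y = y"
  by (induction n) auto

lemma omega_char:
  "y \<in> omega_limit X f x \<longleftrightarrow> y \<in> X \<and> (\<forall>e>0. \<forall>N. \<exists>n\<ge>N. dist ((f^^n) x) y < e)"
proof
  assume "y \<in> omega_limit X f x"
  then obtain n where y: "y \<in> X" and n: "filterlim n at_top sequentially"
    and t: "((\<lambda>i. (f^^n i) x) \<longlongrightarrow> y) sequentially"
    unfolding omega_limit_def by blast
  show "y \<in> X \<and> (\<forall>e>0. \<forall>N. \<exists>n\<ge>N. dist ((f^^n) x) y < e)"
  proof (intro conjI allI impI y)
    fix e :: real and N :: nat assume "e > 0"
    have "eventually (\<lambda>i. dist ((f^^n i) x) y < e) sequentially"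
      using t \<open>e>0\<close> by (rule tendstoD)
    moreover have "eventually (\<lambda>i. N \<le> n i) sequentially"
      using n by (simp add: filterlim_at_top)
    ultimately have "eventually (\<lambda>i. dist ((f^^n i) x) y < e \<and> N \<le> n i) sequentially"
      by (rule eventually_conj)
    then obtain M where "\<forall>i\<ge>M. dist ((f^^n i) x) y < e \<and> N \<le> n i"
      unfolding eventually_sequentially by blast
    then show "\<exists>n\<ge>N. dist ((f^^n) x) y < e" by blast
  qed
next
  assume R: "y \<in> X \<and> (\<forall>e>0. \<forall>N. \<exists>n\<ge>N. dist ((f^^n) x) y < e)"
  have "\<forall>k N. \<exists>n\<ge>N. dist ((f^^n) x) y < inverse (real (Suc k))"
    using R by simp
  then obtain g where g: "\<And>k N. g k N \<ge> N \<and> dist ((f^^g k N) x) y < inverse (real (Suc k))"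
    by metis
  define n where "n = seqpick g"
  have n_ge: "n k \<ge> k" for k unfolding n_def by (rule seqpick_ge) (use g in blast)
  have fl: "filterlim n at_top sequentially"
    unfolding filterlim_at_top eventually_sequentially using n_ge le_trans by blast
  have d: "dist ((f^^n k) x) y < inverse (real (Suc k))" for k
  proof (cases k)
    case 0 then show ?thesis using g[where k=0 and N=0] by (simp add: n_def)
  next
    case (Suc j) then show ?thesis using g[where k="Suc j" and N="Suc (seqpick g j)"] by (simp add: n_def)
  qed
  have "((\<lambda>i. (f^^n i) x) \<longlongrightarrow> y) sequentially"
    unfolding lim_sequentially
  proof (intro allI impI)
    fix e :: real assume "e > 0"
    then obtain k where k: "inverse (real (Suc k)) < e" using reals_Archimedean by blast
    have "dist ((f ^^ n i) x) y < e" if "i \<ge> k" for i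
    proof -
      have "inverse (real (Suc i)) \<le> inverse (real (Suc k))"
        using that by (simp add: le_imp_inverse_le)
      with d[of i] k show ?thesis by linarith
    qed
    then show "\<exists>N. \<forall>i\<ge>N. dist ((f ^^ n i) x) y < e" by blast
  qed
  with fl R show "y \<in> omega_limit X f x" unfolding omega_limit_def by blast
qed

lemma sep_cc:
  fixes S T :: "'a::metric_space set"
  assumes "compact S" "closed T" "S \<inter> T = {}" "S \<noteq> {}" "T \<noteq> {}"
  shows "\<exists>\<delta>>0. \<forall>x\<in>S. \<forall>y\<in>T. \<delta> \<le> dist x y"
proof -
  have "continuous_on S (\<lambda>p. infdist p T)" by (intro continuous_intros)
  then obtain p where p: "p \<in> S" "\<forall>q\<in>S. infdist p T \<le> infdist q T"
    using continuous_attains_inf[OF assms(1,4)] by blast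
  have "p \<notin> T" using p assms(3) by blast
  then have "infdist p T \<noteq> 0" using in_closed_iff_infdist_zero[OF assms(2,5)] by blast
  then have pos: "infdist p T > 0" using infdist_nonneg[of p T] by linarith
  show ?thesis
  proof (intro exI[of _ "infdist p T"] conjI pos ballI)
    fix q y assume "q \<in> S" "y \<in> T"
    then show "infdist p T \<le> dist q y" using p(2) infdist_le[of y T q] by force
  qed
qed

locale omsys =
  fixes X :: "'a::metric_space set" and f :: "'a \<Rightarrow> 'a" and x :: 'a
  assumes cX: "compact X" and cf: "continuous_on X f" and fX: "f ` X \<subseteq> X" and xX: "x \<in> X"
begin

abbreviation "Om \<equiv> omega_limit X f x"

lemma funpow_in: "y \<in> X \<Longrightarrow> (f^^n) y \<in> X"
  by (induction n) (use fX in auto)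

lemma a_in: "(f^^n) x \<in> X"
  by (rule funpow_in[OF xX])

lemma cont_funpow: "continuous_on X (f^^n)"
proof (induction n)
  case 0 then show ?case by (simp add: continuous_on_id)
next
  case (Suc n)
  have "continuous_on X (f \<circ> (f^^n))"
    by (rule continuous_on_compose[OF Suc continuous_on_subset[OF cf]]) (use funpow_in in auto)
  then show ?case by simp
qed

lemma Om_sub: "Om \<subseteq> X"
  unfolding omega_limit_def by blast

lemma closed_X: "closed X" using cX by (rule compact_imp_closed)

lemma closed_Om: "closed Om"
proof -
  have "closure Om \<subseteq> Om"
  proof
    fix y assume y: "y \<in> closure Om"
    have "closure Om \<subseteq> X" using closure_mono[OF Om_sub] closed_X by (simp add: closure_closed)
    with y have yX: "y \<in> X" by blast
    have "\<forall>e>0. \<forall>N. \<exists>n\<ge>N. dist ((f^^n) x) y < e"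
    proof (intro allI impI)
      fix e :: real and N :: nat assume "e > 0"
      then obtain z where z: "z \<in> Om" "dist z y < e/2"
        using y unfolding closure_approachable by (meson half_gt_zero)
      then obtain n where n: "n \<ge> N" "dist ((f^^n) x) z < e/2"
        using \<open>e>0\<close> unfolding omega_char by (meson half_gt_zero)
      have "dist ((f^^n) x) y \<le> dist ((f^^n) x) z + dist z y" by (rule dist_triangle)
      with z n show "\<exists>n\<ge>N. dist ((f^^n) x) y < e" by (intro exI[of _ n]) auto
    qed
    with yX show "y \<in> Om" unfolding omega_char by blast
  qed
  then show ?thesis by (simp add: closure_subset_eq)
qed

lemma compact_Om: "compact Om"
proof -
  have "compact (X \<inter> Om)" by (rule compact_Int_closed[OF cX closed_Om])
  moreover have "X \<inter> Om = Om" using Om_sub by blast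
  ultimately show ?thesis by simp
qed

lemma compact_sub: "V \<subseteq> X \<Longrightarrow> closed V \<Longrightarrow> compact V"
  using compact_Int_closed[OF cX, of V] by (simp add: Int_absorb1)

lemma Om_ne: "Om \<noteq> {}"
proof -
  have "seq_compact X" using cX by (rule compact_imp_seq_compact)
  then obtain l r where l: "l \<in> X" "strict_mono r" "((\<lambda>n. (f^^n) x) \<circ> r) \<longlonglongrightarrow> l"
    using a_in by (metis seq_compactE)
  have "filterlim r at_top sequentially" using l(2) by (rule filterlim_subseq)
  with l have "l \<in> Om" unfolding omega_limit_def by (auto simp: o_def)
  then show ?thesis by blast
qed

lemma f_Om: "y \<in> Om \<Longrightarrow> f y \<in> Om"
proof -
  assume "y \<in> Om"
  then obtain n where y: "y \<in> X" and n: "filterlim n at_top sequentially"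
    and t: "((\<lambda>i. (f^^n i) x) \<longlongrightarrow> y) sequentially"
    unfolding omega_limit_def by blast
  have fl: "filterlim (\<lambda>i. Suc (n i)) at_top sequentially"
    by (rule filterlim_compose[OF filterlim_Suc n])
  have "((\<lambda>i. f ((f^^n i) x)) \<longlongrightarrow> f y) sequentially"
    by (rule continuous_on_tendsto_compose[OF cf t y]) (simp add: a_in)
  then have "((\<lambda>i. (f^^Suc (n i)) x) \<longlongrightarrow> f y) sequentially" by simp
  moreover have "f y \<in> X" using y fX by blast
  ultimately show "f y \<in> Om" using fl unfolding omega_limit_def by blast
qed

lemma funpow_Om: "y \<in> Om \<Longrightarrow> (f^^k) y \<in> Om"
  by (induction k) (auto intro: f_Om)

lemma om_near:
  assumes "y \<in> Om" "e > 0" shows "\<exists>n\<ge>N. dist ((f^^n) x) y < e"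
proof -
  have "\<forall>e>0. \<forall>N. \<exists>n\<ge>N. dist ((f^^n) x) y < e" using assms(1) unfolding omega_char by (rule conjunct2)
  then show ?thesis using assms(2) by blast
qed

lemma eventually_near:
  assumes "\<rho> > 0" shows "\<exists>N. \<forall>n\<ge>N. \<exists>w\<in>Om. dist ((f^^n) x) w < \<rho>"
proof -
  define K where "K = X \<inter> (\<Inter>w\<in>Om. - ball w \<rho>)"
  have clK: "closed K" unfolding K_def
    by (intro closed_Int closed_X closed_INT ballI closed_Compl open_ball)
  have "compact (X \<inter> K)" by (rule compact_Int_closed[OF cX clK])
  moreover have "X \<inter> K = K" unfolding K_def by blast
  ultimately have cK: "compact K" by simp
  have ex: "\<exists>e N. e > 0 \<and> (\<forall>n\<ge>N. e \<le> dist ((f^^n) x) p)" if "p \<in> K" for p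
  proof -
    have pX: "p \<in> X" using that unfolding K_def by blast
    have "p \<notin> Om"
    proof
      assume "p \<in> Om"
      then have "p \<in> - ball p \<rho>" using that unfolding K_def by blast
      with assms show False by simp
    qed
    with pX obtain e N where "e > 0" "\<forall>n\<ge>N. \<not> dist ((f^^n) x) p < e"
      unfolding omega_char by blast
    then show ?thesis by (intro exI[of _ e] exI[of _ N]) (simp add: not_less)
  qed
  have "\<forall>p\<in>K. \<exists>e N. e > 0 \<and> (\<forall>n\<ge>N. e \<le> dist ((f^^n) x) p)" using ex by blast
  then obtain E where "\<forall>p\<in>K. \<exists>N. E p > 0 \<and> (\<forall>n\<ge>N. E p \<le> dist ((f^^n) x) p)"
    by (rule bchoice[THEN exE]) 
  then obtain N' where EN: "\<forall>p\<in>K. E p > 0 \<and> (\<forall>n\<ge>N' p. E p \<le> dist ((f^^n) x) p)"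
    by (rule bchoice[THEN exE])
  have opn: "\<And>p. p \<in> K \<Longrightarrow> open (ball p (E p))" by simp
  have cov: "K \<subseteq> (\<Union>p\<in>K. ball p (E p))"
  proof
    fix q assume "q \<in> K"
    then have "q \<in> ball q (E q)" using EN by simp
    with \<open>q \<in> K\<close> show "q \<in> (\<Union>p\<in>K. ball p (E p))" by blast
  qed
  obtain K' where K': "K' \<subseteq> K" "finite K'" "K \<subseteq> (\<Union>p\<in>K'. ball p (E p))"
    by (rule compactE_image[OF cK opn cov])
  define N where "N = (\<Sum>p\<in>K'. N' p)"
  have "\<exists>w\<in>Om. dist ((f^^n) x) w < \<rho>" if "n \<ge> N" for n
  proof (rule ccontr)
    assume H: "\<not> (\<exists>w\<in>Om. dist ((f^^n) x) w < \<rho>)"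
    then have "\<forall>w\<in>Om. (f^^n) x \<in> - ball w \<rho>" by (simp add: dist_commute)
    then have "(f^^n) x \<in> K" unfolding K_def using a_in by blast
    then have "(f^^n) x \<in> (\<Union>p\<in>K'. ball p (E p))" using K'(3) by (rule rev_subsetD)
    then obtain p where p1: "p \<in> K'" and "(f^^n) x \<in> ball p (E p)" by (rule UN_E)
    then have p: "p \<in> K'" "dist p ((f^^n) x) < E p" by simp_all
    have "N' p \<le> N" unfolding N_def by (rule member_le_sum[OF p(1) _ K'(2)]) simp
    then have "E p \<le> dist ((f^^n) x) p" using EN p(1) K'(1) that by auto
    with p(2) show False by (simp add: dist_commute)
  qed
  then show ?thesis by blast
qed

lemma clopen_inv:
  assumes V: "V \<subseteq> Om" "closed V" "closed (Om - V)" "V \<noteq> {}" "f ` V \<subseteq> V"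
  shows "V = Om"
proof (rule ccontr)
  assume "V \<noteq> Om"
  then obtain z where z: "z \<in> Om" "z \<notin> V" using V(1) by blast
  obtain v where v: "v \<in> V" using V(4) by blast
  have "compact V" using V Om_sub by (intro compact_sub) auto
  then obtain \<delta> where \<delta>: "\<delta> > 0" "\<forall>p\<in>V. \<forall>q\<in>Om - V. \<delta> \<le> dist p q"
    using sep_cc[OF _ V(3)] z v by blast
  have "uniformly_continuous_on X f" using cf cX by (rule compact_uniformly_continuous)
  then obtain \<eta> where \<eta>: "\<eta> > 0" "\<forall>p\<in>X. \<forall>q\<in>X. dist q p < \<eta> \<longrightarrow> dist (f q) (f p) < \<delta>/2"
    unfolding uniformly_continuous_on_def using \<delta>(1) by (meson half_gt_zero)
  define \<rho> where "\<rho> = min \<eta> (\<delta>/2)"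
  have \<rho>: "\<rho> > 0" using \<eta> \<delta> by (simp add: \<rho>_def)
  obtain N where N: "\<forall>n\<ge>N. \<exists>w\<in>Om. dist ((f^^n) x) w < \<rho>"
    using eventually_near[OF \<rho>] by blast
  obtain n1 where n1: "n1 \<ge> N" "dist ((f^^n1) x) v < \<rho>"
    using om_near[of v \<rho> N] v V(1) \<rho> by blast
  have step: "\<exists>w\<in>V. dist ((f^^(n1+k)) x) w < \<rho>" for k
  proof (induction k)
    case 0 then show ?case using n1 v by auto
  next
    case (Suc k)
    then obtain w where w: "w \<in> V" "dist ((f^^(n1+k)) x) w < \<rho>" by blast
    have wX: "w \<in> X" using w V(1) Om_sub by blast
    have fw: "f w \<in> V" using w V(5) by blast
    have d1: "dist (f ((f^^(n1+k)) x)) (f w) < \<delta>/2"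
    proof -
      have "dist ((f^^(n1+k)) x) w < \<eta>" using w(2) \<rho>_def by simp
      then show ?thesis using \<eta>(2) wX a_in by blast
    qed
    obtain w' where w': "w' \<in> Om" "dist ((f^^(n1+Suc k)) x) w' < \<rho>"
    proof -
      have "n1 + Suc k \<ge> N" using n1 by simp
      then show ?thesis using N that by blast
    qed
    have "w' \<in> V"
    proof (rule ccontr)
      assume "w' \<notin> V"
      then have "\<delta> \<le> dist (f w) w'" using \<delta>(2) fw w' by blast
      moreover have "dist (f w) w' \<le> dist (f w) ((f^^(n1+Suc k)) x) + dist ((f^^(n1+Suc k)) x) w'"
        by (rule dist_triangle)
      moreover have "dist (f w) ((f^^(n1+Suc k)) x) < \<delta>/2"
        using d1 by (simp add: dist_commute)
      moreover have "\<rho> \<le> \<delta>/2" by (simp add: \<rho>_def)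
      ultimately show False using w'(2) by linarith
    qed
    with w' show ?case by blast
  qed
  obtain n where n: "n \<ge> n1" "dist ((f^^n) x) z < \<rho>"
    using om_near[of z \<rho> n1] z \<rho> by blast
  obtain w where w: "w \<in> V" "dist ((f^^n) x) w < \<rho>"
    using step[of "n - n1"] n(1) by auto
  have "\<delta> \<le> dist w z" using \<delta>(2) w z by blast
  moreover have "dist w z \<le> dist w ((f^^n) x) + dist ((f^^n) x) z" by (rule dist_triangle)
  moreover have "\<rho> \<le> \<delta>/2" by (simp add: \<rho>_def)
  ultimately show False using w(2) n(2) by (simp add: dist_commute)
qed


lemma inj_Om:
  assumes tp: "totally_periodic f Om" shows "inj_on f Om"
proof
  fix y z assume y: "y \<in> Om" and z: "z \<in> Om" and e: "f y = f z"
  obtain m where m: "m \<ge> 1" "(f^^m) y = y" using tp y unfolding totally_periodic_def by blast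
  obtain k where k: "k \<ge> 1" "(f^^k) z = z" using tp z unfolding totally_periodic_def by blast
  have y1: "(f^^(m*k)) y = y" using fix_funpow[of "f^^m" y k] m(2) by (simp add: funpow_mult)
  have z1: "(f^^(m*k)) z = z" using fix_funpow[of "f^^k" z m] k(2) by (simp add: funpow_mult mult.commute)
  have "m * k \<ge> 1" using m(1) k(1) by simp
  then obtain q where q: "m * k = Suc q" by (metis Suc_le_D One_nat_def)
  have "y = (f^^q) (f y)" using y1 unfolding q by (simp add: funpow_swap1)
  also have "\<dots> = (f^^q) (f z)" using e by simp
  also have "\<dots> = z" using z1 unfolding q by (simp add: funpow_swap1)
  finally show "y = z" .
qed

lemma surj_Om:
  assumes tp: "totally_periodic f Om" shows "f ` Om = Om"
proof
  show "f ` Om \<subseteq> Om" using f_Om by blast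
  show "Om \<subseteq> f ` Om"
  proof
    fix y assume y: "y \<in> Om"
    obtain m where m: "m \<ge> 1" "(f^^m) y = y" using tp y unfolding totally_periodic_def by blast
    then obtain q where q: "m = Suc q" by (metis Suc_le_D One_nat_def)
    have "y = f ((f^^q) y)" using m(2) unfolding q by simp
    moreover have "(f^^q) y \<in> Om" using y by (rule funpow_Om)
    ultimately show "y \<in> f ` Om" by blast
  qed
qed

definition clop :: "'a set \<Rightarrow> bool" where
  "clop V \<longleftrightarrow> V \<subseteq> Om \<and> closed V \<and> closed (Om - V)"

lemma clop_image:
  assumes tp: "totally_periodic f Om" and V: "clop V" shows "clop (f ` V)"
proof -
  have V1: "V \<subseteq> Om" "closed V" "closed (Om - V)" using V unfolding clop_def by auto
  have cl: "closed (f ` W)" if "W \<subseteq> Om" "closed W" for W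
  proof -
    have "compact W" using that Om_sub by (intro compact_sub) auto
    moreover have "continuous_on W f" using cf that Om_sub by (meson continuous_on_subset subset_trans)
    ultimately have "compact (f ` W)" by (simp add: compact_continuous_image)
    then show ?thesis by (rule compact_imp_closed)
  qed
  have "f ` V \<subseteq> Om" using V1(1) f_Om by blast
  moreover have "closed (f ` V)" using cl V1 by blast
  moreover have "Om - f ` V = f ` (Om - V)"
    using inj_on_image_set_diff[OF inj_Om[OF tp], of Om V] V1(1) surj_Om[OF tp] by auto
  moreover have "closed (f ` (Om - V))" using cl V1 by blast
  ultimately show ?thesis unfolding clop_def by simp
qed

lemma clop_funpow:
  assumes tp: "totally_periodic f Om" and V: "clop V" shows "clop ((f^^k) ` V)"
proof (induction k)
  case 0 then show ?case using V by simp
next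
  case (Suc k)
  have "clop (f ` ((f^^k) ` V))" by (rule clop_image[OF tp Suc])
  then show ?case by (simp add: image_comp)
qed

lemma union_all:
  assumes tp: "totally_periodic f Om" and V: "clop V" "V \<noteq> {}"
    and m: "m \<ge> 1" and fx: "\<forall>v\<in>V. (f^^m) v = v"
  shows "(\<Union>k<m. (f^^k) ` V) = Om"
proof (rule clopen_inv)
  let ?W = "\<Union>k<m. (f^^k) ` V"
  have ck: "clop ((f^^k) ` V)" for k by (rule clop_funpow[OF tp V(1)])
  show "?W \<subseteq> Om" using ck unfolding clop_def by blast
  show "closed ?W" using ck unfolding clop_def by (intro closed_UN) auto
  have "0 \<in> {..<m}" using m by simp
  then have "Om - ?W = (\<Inter>k<m. Om - (f^^k) ` V)" by blast
  then show "closed (Om - ?W)" using ck unfolding clop_def by (metis (no_types, lifting) closed_INT)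
  have "V \<subseteq> ?W" using m by (auto intro!: bexI[of _ 0])
  then show "?W \<noteq> {}" using V(2) by blast
  show "f ` ?W \<subseteq> ?W"
  proof
    fix w assume "w \<in> f ` ?W"
    then obtain k v where kv: "k < m" "v \<in> V" "w = f ((f^^k) v)" by blast
    then have w: "w = (f^^Suc k) v" by simp
    show "w \<in> ?W"
    proof (cases "Suc k < m")
      case True then show ?thesis using w kv(2) by blast
    next
      case False
      then have "Suc k = m" using kv(1) by simp
      then have "w = v" using w fx kv(2) by simp
      then have "w = (f^^0) v" by simp
      then show ?thesis using kv(2) m by (auto intro!: bexI[of _ 0])
    qed
  qed
qed

lemma clopen_nbhd:
  assumes td: "totally_disconnected Om" and y: "y \<in> Om" and e: "e > 0"
  shows "\<exists>V. y \<in> V \<and> V \<subseteq> ball y e \<and> clop V"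
proof -
  let ?Y = "top_of_set Om"
  have cs: "compact_space ?Y"
    using compact_Om by (intro compact_space_subtopology) (simp add: compactin_euclidean_iff)
  have hs: "Hausdorff_space ?Y" by (rule Hausdorff_space_subtopology[OF Hausdorff_space_euclidean])
  have qc: "quasi_components_of ?Y = connected_components_of ?Y"
    by (rule quasi_eq_connected_components_of) (simp add: cs hs)
  define C where "C = connected_component_of_set ?Y y"
  have "connectedin ?Y C" unfolding C_def by (rule connectedin_connected_component_of)
  then have "connected C" "C \<subseteq> Om" by (simp_all add: connectedin_subtopology connectedin_iff_connected)
  then obtain a where "C \<subseteq> {a}" using td unfolding totally_disconnected_def by blast
  moreover have "y \<in> C" unfolding C_def using y by (simp add: connected_component_of_refl)
  ultimately have C1: "C = {y}" by blast
  have "{y} \<in> connected_components_of ?Y"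
    unfolding connected_components_of_def using y C1 C_def by auto
  then have yq: "{y} \<in> quasi_components_of ?Y" using qc by simp
  define K where "K = Om - ball y e"
  have "compact (Om \<inter> - ball y e)" by (rule compact_Int_closed[OF compact_Om]) auto
  then have "compact K" unfolding K_def by (simp add: Diff_eq)
  then have "compactin ?Y K"
    by (intro compact_imp_compactin_subtopology) (auto simp: compactin_euclidean_iff K_def)
  moreover have "disjnt {y} K" unfolding K_def using e by simp
  ultimately have "separated_between ?Y {y} K"
    using separated_between_quasi_component_compact[OF yq] by blast
  then obtain U V where UV: "openin ?Y U" "openin ?Y V" "U \<union> V = Om" "disjnt U V" "{y} \<subseteq> U" "K \<subseteq> V"
    unfolding separated_between_def by auto
  have U1: "U \<subseteq> ball y e"
  proof
    fix p assume "p \<in> U"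
    then have "p \<in> Om" "p \<notin> V" using UV(3,4) unfolding disjnt_def by blast+
    then show "p \<in> ball y e" using UV(6) unfolding K_def by blast
  qed
  have eqU: "U = Om - V" and eqV: "V = Om - U" using UV(3,4) unfolding disjnt_def by blast+
  have "closedin ?Y (Om - V)" using UV(2) by (simp add: closedin_diff)
  then have "closed U" using eqU closed_Om closedin_closed_trans by metis
  have "closedin ?Y (Om - U)" using UV(1) by (simp add: closedin_diff)
  then have "closed (Om - U)" using closed_Om closedin_closed_trans by metis
  have "U \<subseteq> Om" using UV(3) by blast
  show ?thesis
    using \<open>closed U\<close> \<open>closed (Om - U)\<close> \<open>U \<subseteq> Om\<close> U1 UV(5) unfolding clop_def by blast
qed

lemma baire_step:
  assumes tp: "totally_periodic f Om" and ne: "Om \<noteq> {}"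
  shows "\<exists>m\<ge>1. \<exists>U. openin (top_of_set Om) U \<and> U \<noteq> {} \<and> (\<forall>u\<in>U. (f^^m) u = u)"
proof (rule ccontr)
  assume H: "\<not> ?thesis"
  let ?Y = "top_of_set Om"
  define G where "G = range (\<lambda>m. {y\<in>Om. (f^^Suc m) y = y})"
  have cs: "compact_space ?Y"
    using compact_Om by (intro compact_space_subtopology) (simp add: compactin_euclidean_iff)
  have hs: "Hausdorff_space ?Y" by (rule Hausdorff_space_subtopology[OF Hausdorff_space_euclidean])
  have "?Y interior_of \<Union>G = {}"
  proof (rule Baire_category_alt)
    show "completely_metrizable_space ?Y \<or> locally_compact_space ?Y \<and> regular_space ?Y"
      using cs hs compact_imp_locally_compact_space compact_Hausdorff_imp_regular_space by blast
    show "countable G" unfolding G_def by simp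
    fix T assume "T \<in> G"
    then obtain m where T: "T = {y\<in>Om. (f^^Suc m) y = y}" unfolding G_def by blast
    have "continuous_on Om (\<lambda>y. dist ((f^^Suc m) y) y)"
      by (intro continuous_on_dist continuous_on_id continuous_on_subset[OF cont_funpow Om_sub])
    then have "closed {y\<in>Om. dist ((f^^Suc m) y) y = 0}"
      by (rule continuous_closed_preimage_constant[OF _ closed_Om])
    then have "closed T" unfolding T by simp
    then show "closedin ?Y T \<and> ?Y interior_of T = {}"
    proof (intro conjI)
      show "closedin ?Y T" using \<open>closed T\<close> T closedin_closed_eq[OF closed_Om] by auto
      show "?Y interior_of T = {}"
      proof (rule ccontr)
        assume "?Y interior_of T \<noteq> {}"
        moreover have "openin ?Y (?Y interior_of T)" by simp
        moreover have "\<forall>u\<in>?Y interior_of T. (f^^Suc m) u = u"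
          using interior_of_subset[of ?Y T] T by blast
        ultimately show False using H by (metis le_add1 plus_1_eq_Suc)
      qed
    qed
  qed
  moreover have "\<Union>G = Om"
  proof
    show "\<Union>G \<subseteq> Om" unfolding G_def by blast
    show "Om \<subseteq> \<Union>G"
    proof
      fix y assume y: "y \<in> Om"
      obtain m where m: "m \<ge> 1" "(f^^m) y = y" using tp y unfolding totally_periodic_def by blast
      then obtain q where q: "m = Suc q" by (metis Suc_le_D One_nat_def)
      then show "y \<in> \<Union>G" using y m unfolding G_def by blast
    qed
  qed
  ultimately have "?Y interior_of Om = {}" by simp
  moreover have "?Y interior_of Om = Om" using interior_of_topspace[of ?Y] by simp
  ultimately show False using ne by simp
qed

theorem finite_Om:
  assumes tp: "totally_periodic f Om" and td: "totally_disconnected Om"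
  shows "finite Om"
proof (cases "Om = {}")
  case True then show ?thesis by simp
next
  case False
  obtain m U where m: "m \<ge> 1" and U: "openin (top_of_set Om) U" "U \<noteq> {}" "\<forall>u\<in>U. (f^^m) u = u"
    using baire_step[OF tp False] by blast
  obtain y where y: "y \<in> U" using U(2) by blast
  obtain e where e: "e > 0" "\<forall>x'\<in>Om. dist x' y < e \<longrightarrow> x' \<in> U"
    using U(1) y unfolding openin_euclidean_subtopology_iff by blast
  have yO: "y \<in> Om" using U(1) y openin_subset by fastforce
  obtain V where V: "y \<in> V" "V \<subseteq> ball y e" "clop V" using clopen_nbhd[OF td yO e(1)] by blast
  have VU: "V \<subseteq> U"
  proof
    fix v assume "v \<in> V"
    then have "v \<in> Om" "dist v y < e" using V unfolding clop_def by (auto simp: dist_commute)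
    then show "v \<in> U" using e(2) by blast
  qed
  have Wall: "(\<Union>k<m. (f^^k) ` V) = Om"
    using union_all[OF tp V(3) _ m] V(1) VU U(3) by blast
  have fixall: "\<forall>w\<in>Om. (f^^m) w = w"
  proof
    fix w assume "w \<in> Om"
    then obtain k v where kv: "v \<in> V" "w = (f^^k) v" using Wall by blast
    have "(f^^m) w = (f^^(m+k)) v" using kv by (simp add: funpow_add)
    also have "\<dots> = (f^^k) ((f^^m) v)" by (simp add: funpow_add add.commute)
    also have "\<dots> = w" using kv VU U(3) by auto
    finally show "(f^^m) w = w" .
  qed
  define Orb where "Orb = (\<lambda>k. (f^^k) y) ` {..<m}"
  have "Om \<subseteq> Orb"
  proof
    fix z assume z: "z \<in> Om"
    show "z \<in> Orb"
    proof (rule ccontr)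
      assume zOrb: "z \<notin> Orb"
      obtain d where d: "d > 0" "\<forall>p\<in>Orb. p \<noteq> z \<longrightarrow> d \<le> dist z p"
        using finite_set_avoid[of Orb z] unfolding Orb_def by blast
      obtain V' where V': "z \<in> V'" "V' \<subseteq> ball z d" "clop V'" using clopen_nbhd[OF td z d(1)] by blast
      have disj: "V' \<inter> Orb = {}"
      proof (rule ccontr)
        assume "V' \<inter> Orb \<noteq> {}"
        then obtain p where p: "p \<in> V'" "p \<in> Orb" by blast
        then have "p \<noteq> z" using zOrb by blast
        then have "d \<le> dist z p" using d p by blast
        moreover have "dist z p < d" using p(1) V'(2) by auto
        ultimately show False by simp
      qed
      have V'Orbrb: "V' \<subseteq> Om" using V'(3) unfolding clop_def by blast
      have "(\<Union>k<m. (f^^k) ` V') = Om"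
        using union_all[OF tp V'(3) _ m] V'(1) V'Orbrb fixall by blast
      then obtain k v where kv: "k < m" "v \<in> V'" "y = (f^^k) v" using yO by blast
      have "v \<in> Orb"
      proof (cases "k = 0")
        case True
        then have "v = (f^^0) y" using kv by simp
        moreover have "(0::nat) \<in> {..<m}" using m by simp
        ultimately show ?thesis unfolding Orb_def by blast
      next
        case False
        have "(f^^(m-k)) y = (f^^(m-k+k)) v" by (simp only: kv(3) funpow_add o_apply)
        also have "m - k + k = m" using kv by simp
        also have "(f^^m) v = v" using fixall kv V'Orbrb by blast
        finally have "v = (f^^(m-k)) y" by simp
        moreover have "m - k < m" using False kv by simp
        ultimately show ?thesis unfolding Orb_def by blast
      qed
      then show False using disj kv(2) by blast
    qed
  qed
  moreover have "finite Orb" unfolding Orb_def by simp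
  ultimately show ?thesis by (rule finite_subset)
qed
end

theorem lemma2p5:
  fixes X :: "'a::metric_space set" and f :: "'a \<Rightarrow> 'a" and x :: 'a
  assumes "compact X"
    and "continuous_on X f"
    and "f ` X \<subseteq> X"
    and "x \<in> X"
    and "totally_periodic f (omega_limit X f x)"
    and "totally_disconnected (omega_limit X f x)"
  shows "finite (omega_limit X f x)"
proof -
  interpret omsys X f x using assms(1-4) by unfold_locales
  show ?thesis using finite_Om assms(5,6) by blast
qed

end
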